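(* Let $\mathbf v\in\mathbb R_{<0}^{n\times m}$. For every Pareto optimal utility profile $\mathbf u\in\mathcal U^*(\mathbf v)$ there exists an allocation $\mathbf z$ with $\mathbf u(\mathbf z)=\mathbf u$ and $G_{\mathbf z}\in\mathrm{MWW}(\mathbf v)$. Consequently, for every $\mathbf b\in\mathbb R^n_{<0}$ and every competitive utility profile $\mathbf u\in\mathrm{CU}(\mathbf v,\mathbf b)$ there is a competitive allocation $\mathbf z$ with $\mathbf u(\mathbf z)=\mathbf u$ and $G_{\mathbf z}\in\mathrm{MWW}(\mathbf v)$.
   Context: Setup: agents $[n]$, chores $[m]$, allocations $\mathbf z\in\mathbb R^{n\times m}_{\ge0}$ with column sums $1$, $u_i(\mathbf z_i)=\sum_jv_{i,j}z_{i,j}$. $\mathcal U^*(\mathbf v)$ is the set of utility profiles $\mathbf u(\mathbf z)$ of Pareto optimal allocations $\mathbf z$. Consumption graph $G_{\mathbf z}$: edge $(i,j)$ iff $z_{i,j}>0$. $G_\tau(\mathbf v)$ for $\tau\in\mathbb R^n_{>0}$: edge $(i,j)$ iff $\tau_i|v_{i,j}|\le\tau_{i'}|v_{i',j}|$ for all $i'$; $\mathrm{MWW}(\mathbf v)=\{G_\tau(\mathbf v):\tau\in\mathbb R^n_{>0}\}$. Competitive allocation for budgets $\mathbf b\in\mathbb R^n_{<0}$: there exist prices $\mathbf p\in\mathbb R^m_{<0}$ such that each $\mathbf z_i$ maximizes $u_i$ over bundles $\mathbf x\in\mathbb R^m_{\ge0}$ with $\sum_jp_jx_j\le b_i$; $\mathrm{CU}(\mathbf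 v,\mathbf b)$ is the set of their utility profiles. *)

theory Defs
  imports Main "HOL.Real"
begin

text \<open>Agents are 0..<n, chores are 0..<m. Valuations, allocations, prices, budgets
  and weights are functions on nat; only values at indices in range matter.\<close>

definition allocation :: "nat \<Rightarrow> nat \<Rightarrow> (nat \<Rightarrow> nat \<Rightarrow> real) \<Rightarrow> bool" where
  "allocation n m z \<longleftrightarrow> (\<forall>i<n. \<forall>j<m. z i j \<ge> 0) \<and> (\<forall>j<m. (\<Sum>i<n. z i j) = 1)"

definition bundle_util :: "nat \<Rightarrow> (nat \<Rightarrow> nat \<Rightarrow> real) \<Rightarrow> nat \<Rightarrow> (nat \<Rightarrow> real) \<Rightarrow> real" where
  "bundle_util m v i x = (\<Sum>j<m. v i j * x j)"

definition profile :: "nat \<Rightarrow> nat \<Rightarrow> (nat \<Rightarrow> nat \<Rightarrow> real) \<Rightarrow> (nat \<Rightarrow> nat \<Rightarrow> real) \<Rightarrow> (nat \<Rightarrow> real)" where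
  "profile n m v z = (\<lambda>i. if i < n then bundle_util m v i (z i) else 0)"

definition pareto_optimal :: "nat \<Rightarrow> nat \<Rightarrow> (nat \<Rightarrow> nat \<Rightarrow> real) \<Rightarrow> (nat \<Rightarrow> nat \<Rightarrow> real) \<Rightarrow> bool" where
  "pareto_optimal n m v z \<longleftrightarrow> allocation n m z \<and>
     \<not> (\<exists>z'. allocation n m z' \<and>
            (\<forall>i<n. profile n m v z' i \<ge> profile n m v z i) \<and>
            (\<exists>i<n. profile n m v z' i > profile n m v z i))"

definition PO_profiles :: "nat \<Rightarrow> nat \<Rightarrow> (nat \<Rightarrow> nat \<Rightarrow> real) \<Rightarrow> (nat \<Rightarrow> real) set" where
  "PO_profiles n m v = {profile n m v z | z. pareto_optimal n m v z}"

definition cons_graph :: "nat \<Rightarrow> nat \<Rightarrow> (nat \<Rightarrow> nat \<Rightarrow> real) \<Rightarrow> (nat \<times> nat) set" where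
  "cons_graph n m z = {(i, j). i < n \<and> j < m \<and> z i j > 0}"

definition tau_graph :: "nat \<Rightarrow> nat \<Rightarrow> (nat \<Rightarrow> real) \<Rightarrow> (nat \<Rightarrow> nat \<Rightarrow> real) \<Rightarrow> (nat \<times> nat) set" where
  "tau_graph n m \<tau> v = {(i, j). i < n \<and> j < m \<and>
      (\<forall>i'<n. \<tau> i * \<bar>v i j\<bar> \<le> \<tau> i' * \<bar>v i' j\<bar>)}"

definition MWW :: "nat \<Rightarrow> nat \<Rightarrow> (nat \<Rightarrow> nat \<Rightarrow> real) \<Rightarrow> (nat \<times> nat) set set" where
  "MWW n m v = {tau_graph n m \<tau> v | \<tau>. \<forall>i<n. \<tau> i > 0}"

definition competitive :: "nat \<Rightarrow> nat \<Rightarrow> (nat \<Rightarrow> nat \<Rightarrow> real) \<Rightarrow> (nat \<Rightarrow> real) \<Rightarrow> (nat \<Rightarrow> nat \<Rightarrow> real) \<Rightarrow> bool" where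
  "competitive n m v b z \<longleftrightarrow> allocation n m z \<and>
     (\<exists>p. (\<forall>j<m. p j < 0) \<and>
        (\<forall>i<n. (\<Sum>j<m. p j * z i j) \<le> b i \<and>
           (\<forall>x. (\<forall>j<m. x j \<ge> 0) \<and> (\<Sum>j<m. p j * x j) \<le> b i \<longrightarrow>
                bundle_util m v i x \<le> bundle_util m v i (z i))))"

definition CU :: "nat \<Rightarrow> nat \<Rightarrow> (nat \<Rightarrow> nat \<Rightarrow> real) \<Rightarrow> (nat \<Rightarrow> real) \<Rightarrow> (nat \<Rightarrow> real) set" where
  "CU n m v b = {profile n m v z | z. competitive n m v b z}"

end

theory Submission
  imports Defs
begin



type_synonym arc = "nat \<times> nat \<times> real \<times> bool"

inductive_set der :: "arc set \<Rightarrow> arc set" for A where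
  base: "e \<in> A \<Longrightarrow> e \<in> der A"
| comp: "(a,b,c1,s1) \<in> der A \<Longrightarrow> (b,d,c2,s2) \<in> der A \<Longrightarrow> (a,d,c1*c2,s1\<or>s2) \<in> der A"

definition good :: "arc set \<Rightarrow> bool" where
  "good A \<longleftrightarrow> (\<forall>a c s. (a,a,c,s) \<in> der A \<longrightarrow> c \<le> 1 \<and> (s \<longrightarrow> c < 1))"

definition sat :: "(nat \<Rightarrow> real) \<Rightarrow> arc set \<Rightarrow> bool" where
  "sat \<tau> A \<longleftrightarrow> (\<forall>a b c s. (a,b,c,s) \<in> A \<longrightarrow> c * \<tau> a \<le> \<tau> b \<and> (s \<longrightarrow> c * \<tau> a < \<tau> b))"

lemma der_mono: assumes "A \<subseteq> der B" shows "e \<in> der A \<Longrightarrow> e \<in> der B"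
proof (induction rule: der.induct)
  case (base e) then show ?case using assms by auto
next
  case (comp a b c1 s1 d c2 s2) then show ?case by (auto intro: der.comp)
qed


lemma interval:
  fixes L U :: "(real \<times> bool) set"
  assumes fL: "finite L" and fU: "finite U"
    and posL: "\<forall>(l,s)\<in>L. l > 0" and posU: "\<forall>(u,s)\<in>U. u > 0"
    and comp: "\<forall>(l,sl)\<in>L. \<forall>(u,su)\<in>U. l \<le> u \<and> (sl \<or> su \<longrightarrow> l < u)"
  shows "\<exists>t>0. (\<forall>(l,s)\<in>L. l \<le> t \<and> (s \<longrightarrow> l < t)) \<and> (\<forall>(u,s)\<in>U. t \<le> u \<and> (s \<longrightarrow> t < u))"
proof (cases "U = {}")
  case True
  define t where "t = 1 + (\<Sum>x\<in>L. fst x)"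
  have "\<forall>x\<in>L. fst x \<le> (\<Sum>x\<in>L. fst x)"
    using posL fL by (intro ballI member_le_sum) auto
  moreover have "(\<Sum>x\<in>L. fst x) \<ge> 0" using posL by (intro sum_nonneg) auto
  ultimately have "\<forall>x\<in>L. fst x < t" "t > 0" unfolding t_def by auto
  then show ?thesis using True by (intro exI[of _ t]) force
next
  case Une: False
  define \<mu> where "\<mu> = Min (fst ` U)"
  have \<mu>U: "\<forall>x\<in>U. \<mu> \<le> fst x" unfolding \<mu>_def using fU by simp
  have "\<mu> \<in> fst ` U" unfolding \<mu>_def using fU Une by (intro Min_in) auto
  then obtain u0 s0 where u0: "(u0,s0) \<in> U" "\<mu> = u0" by auto
  have \<mu>pos: "\<mu> > 0" using u0 posU by auto
  show ?thesis
  proof (cases "L = {}")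
    case True
    have "\<forall>x\<in>U. \<mu>/2 < fst x" using \<mu>U \<mu>pos by fastforce
    then show ?thesis using True \<mu>pos by (intro exI[of _ "\<mu>/2"]) auto
  next
    case Lne: False
    define lam where "lam = Max (fst ` L)"
    have lamL: "\<forall>x\<in>L. fst x \<le> lam" unfolding lam_def using fL by simp
    have "lam \<in> fst ` L" unfolding lam_def using fL Lne by (intro Max_in) auto
    then obtain l0 t0 where l0: "(l0,t0) \<in> L" "lam = l0" by auto
    have lampos: "lam > 0" using l0 posL by auto
    have le: "lam \<le> \<mu>" using comp l0 u0 by auto
    show ?thesis
    proof (cases "lam < \<mu>")
      case True
      have "\<forall>x\<in>U. (lam+\<mu>)/2 < fst x" using \<mu>U True by fastforce
      moreover have "\<forall>x\<in>L. fst x < (lam+\<mu>)/2" using lamL True by fastforce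
      ultimately show ?thesis using lampos True
        by (intro exI[of _ "(lam+\<mu>)/2"]) auto
    next
      case False
      then have eq: "lam = \<mu>" using le by auto
      have A: "\<forall>(l,s)\<in>L. l \<le> lam \<and> (s \<longrightarrow> l < lam)"
      proof (intro ballI, clarify)
        fix l s assume ls: "(l,s) \<in> L"
        have "l \<le> lam" using lamL ls by auto
        moreover have "s \<longrightarrow> l < u0" using comp ls u0(1) by auto
        ultimately show "l \<le> lam \<and> (s \<longrightarrow> l < lam)" using u0(2) eq by auto
      qed
      have B: "\<forall>(u,s)\<in>U. lam \<le> u \<and> (s \<longrightarrow> lam < u)"
      proof (intro ballI, clarify)
        fix u s assume us: "(u,s) \<in> U"
        have "\<mu> \<le> u" using \<mu>U us by auto
        moreover have "s \<longrightarrow> l0 < u" using comp us l0(1) by auto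
        ultimately show "lam \<le> u \<and> (s \<longrightarrow> lam < u)" using l0(2) eq by auto
      qed
      show ?thesis using A B lampos by blast
    qed
  qed
qed

lemma potential_aux:
  assumes "finite V"
  shows "\<forall>A. finite A \<and> (\<forall>(a,b,c,s)\<in>A. c > 0 \<and> a \<in> V \<and> b \<in> V) \<and> good A
           \<longrightarrow> (\<exists>\<tau>. (\<forall>x. \<tau> x > 0) \<and> sat \<tau> A)"
  using assms
proof (induction V rule: finite_induct)
  case empty
  show ?case
  proof (intro allI impI)
    fix A :: "arc set" assume h: "finite A \<and> (\<forall>(a,b,c,s)\<in>A. c > 0 \<and> a \<in> {} \<and> b \<in> {}) \<and> good A"
    then have "A = {}" by fastforce
    then show "\<exists>\<tau>. (\<forall>x. \<tau> x > 0) \<and> sat \<tau> A" by (intro exI[of _ "\<lambda>_. 1"]) (simp add: sat_def)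
  qed
next
  case (insert x V)
  show ?case
  proof (intro allI impI)
    fix A :: "arc set"
    assume h: "finite A \<and> (\<forall>(a,b,c,s)\<in>A. c > 0 \<and> a \<in> insert x V \<and> b \<in> insert x V) \<and> good A"
    have fA: "finite A" and arcA: "\<And>a b c s. (a,b,c,s)\<in>A \<Longrightarrow> c > 0 \<and> a \<in> insert x V \<and> b \<in> insert x V"
      and gA: "good A" using h by fastforce+
    define A1 where "A1 = {e\<in>A. fst e \<noteq> x \<and> fst (snd e) \<noteq> x}"
    define P where "P = {(e1,e2). e1\<in>A \<and> e2\<in>A \<and> fst(snd e1)=x \<and> fst e2 = x \<and> fst e1 \<noteq> x \<and> fst (snd e2) \<noteq> x}"
    define f :: "arc \<times> arc \<Rightarrow> arc" where "f = (\<lambda>((a,_,c1,s1),(_,d,c2,s2)). (a,d,c1*c2,s1\<or>s2))"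
    define A' where "A' = A1 \<union> f ` P"
    have "P \<subseteq> A \<times> A" unfolding P_def by auto
    then have fP: "finite P" using fA finite_subset by blast
    have fA': "finite A'" unfolding A'_def A1_def using fA fP by auto
    have memfP: "\<exists>a c1 s1 d c2 s2. e = (a,d,c1*c2,s1\<or>s2) \<and> (a,x,c1,s1)\<in>A \<and> (x,d,c2,s2)\<in>A \<and> a \<noteq> x \<and> d \<noteq> x"
      if "e \<in> f ` P" for e
    proof -
      from that obtain p where p: "p \<in> P" "e = f p" by auto
      obtain e1 e2 where p12: "p = (e1,e2)" by (cases p) auto
      obtain a1 b1 c1 s1 where e1: "e1 = (a1,b1,c1,s1)" by (metis prod_cases4)
      obtain a2 b2 c2 s2 where e2: "e2 = (a2,b2,c2,s2)" by (metis prod_cases4)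
      show ?thesis using p unfolding p12 e1 e2 f_def P_def by auto
    qed
    have arcA': "c > 0 \<and> a \<in> V \<and> b \<in> V" if "(a,b,c,s) \<in> A'" for a b c s
    proof (cases "(a,b,c,s) \<in> A1")
      case True then show ?thesis using arcA[of a b c s] unfolding A1_def by auto
    next
      case False
      then have "(a,b,c,s) \<in> f ` P" using that unfolding A'_def by auto
      from memfP[OF this] obtain c1 s1 c2 s2 where "c = c1*c2" "(a,x,c1,s1)\<in>A" "(x,b,c2,s2)\<in>A" "a\<noteq>x" "b\<noteq>x"
        by auto
      then show ?thesis using arcA[of a x c1 s1] arcA[of x b c2 s2] by auto
    qed
    have sub: "A' \<subseteq> der A"
    proof
      fix e assume "e \<in> A'"
      then show "e \<in> der A"
      proof (cases "e \<in> A1")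
        case True then show ?thesis unfolding A1_def by (auto intro: der.base)
      next
        case False
        then have "e \<in> f ` P" using \<open>e \<in> A'\<close> unfolding A'_def by auto
        from memfP[OF this] show ?thesis by (auto intro: der.comp der.base)
      qed
    qed
    have gA': "good A'" using gA der_mono[OF sub] unfolding good_def by blast
    have "\<forall>(a,b,c,s)\<in>A'. c > 0 \<and> a \<in> V \<and> b \<in> V" using arcA' by auto
    then obtain \<tau>' where tpos: "\<forall>x. \<tau>' x > 0" and sat': "sat \<tau>' A'"
      using insert.IH fA' gA' by blast
    define L where "L = (\<lambda>(a,b,c,s). (c * \<tau>' a, s)) ` {e\<in>A. fst (snd e) = x \<and> fst e \<noteq> x}"
    define U where "U = (\<lambda>(a,b,c,s). (\<tau>' b / c, s)) ` {e\<in>A. fst e = x \<and> fst (snd e) \<noteq> x}"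
    have fL: "finite L" unfolding L_def using fA by auto
    have fU: "finite U" unfolding U_def using fA by auto
    have memL: "\<exists>a c. l = c * \<tau>' a \<and> (a,x,c,s)\<in>A \<and> a \<noteq> x" if "(l,s)\<in>L" for l s
      using that unfolding L_def by force
    have memU: "\<exists>b c. u = \<tau>' b / c \<and> (x,b,c,s)\<in>A \<and> b \<noteq> x" if "(u,s)\<in>U" for u s
      using that unfolding U_def by force
    have posL: "\<forall>(l,s)\<in>L. l > 0"
    proof (intro ballI, clarify)
      fix l s assume "(l,s)\<in>L"
      from memL[OF this] obtain a c where "l = c * \<tau>' a" "(a,x,c,s)\<in>A" by auto
      then show "l > 0" using arcA[of a x c s] tpos by auto
    qed
    have posU: "\<forall>(u,s)\<in>U. u > 0"
    proof (intro ballI, clarify)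
      fix u s assume "(u,s)\<in>U"
      from memU[OF this] obtain b c where "u = \<tau>' b / c" "(x,b,c,s)\<in>A" by auto
      then show "u > 0" using arcA[of x b c s] tpos by auto
    qed
    have compat: "\<forall>(l,sl)\<in>L. \<forall>(u,su)\<in>U. l \<le> u \<and> (sl \<or> su \<longrightarrow> l < u)"
    proof (intro ballI, clarify)
      fix l sl u su assume "(l,sl)\<in>L" "(u,su)\<in>U"
      from memL[OF this(1)] obtain a c1 where a: "l = c1 * \<tau>' a" "(a,x,c1,sl)\<in>A" "a \<noteq> x" by auto
      from memU[OF \<open>(u,su)\<in>U\<close>] obtain b c2 where b: "u = \<tau>' b / c2" "(x,b,c2,su)\<in>A" "b \<noteq> x" by auto
      have "((a,x,c1,sl),(x,b,c2,su)) \<in> P" unfolding P_def using a b by auto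
      then have "(a,b,c1*c2,sl\<or>su) \<in> A'" unfolding A'_def f_def by force
      then have ineq: "c1*c2 * \<tau>' a \<le> \<tau>' b \<and> (sl\<or>su \<longrightarrow> c1*c2 * \<tau>' a < \<tau>' b)"
        using sat' unfolding sat_def by blast
      have c2: "c2 > 0" using arcA[OF b(2)] by auto
      have e1: "(l \<le> u) = (c1*c2 * \<tau>' a \<le> \<tau>' b)" unfolding a b using c2
        by (simp add: pos_le_divide_eq mult.commute mult.left_commute)
      have e2: "(l < u) = (c1*c2 * \<tau>' a < \<tau>' b)" unfolding a b using c2
        by (simp add: pos_less_divide_eq mult.commute mult.left_commute)
      show "l \<le> u \<and> (sl \<or> su \<longrightarrow> l < u)" using ineq e1 e2 by simp
    qed
    obtain t where t: "t > 0" "\<forall>(l,s)\<in>L. l \<le> t \<and> (s \<longrightarrow> l < t)" "\<forall>(u,s)\<in>U. t \<le> u \<and> (s \<longrightarrow> t < u)"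
      using interval[OF fL fU posL posU compat] by blast
    define \<tau> where "\<tau> = \<tau>'(x := t)"
    have "sat \<tau> A" unfolding sat_def
    proof (intro allI impI)
      fix a b c s assume e: "(a,b,c,s) \<in> A"
      have cpos: "c > 0" using arcA[OF e] by auto
      show "c * \<tau> a \<le> \<tau> b \<and> (s \<longrightarrow> c * \<tau> a < \<tau> b)"
      proof (cases "a = x"; cases "b = x")
        assume "a = x" "b = x"
        then have "(x,x,c,s) \<in> der A" using e by (auto intro: der.base)
        then have "c \<le> 1 \<and> (s \<longrightarrow> c < 1)" using gA unfolding good_def by blast
        then show ?thesis using \<open>a = x\<close> \<open>b = x\<close> t(1) unfolding \<tau>_def
          by (auto simp: mult_le_cancel_right1 mult_less_cancel_right1)
      next
        assume "a = x" "b \<noteq> x"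
        then have "(\<tau>' b / c, s) \<in> U" unfolding U_def using e by force
        then have "t \<le> \<tau>' b / c \<and> (s \<longrightarrow> t < \<tau>' b / c)" using t(3) by blast
        then show ?thesis using \<open>a = x\<close> \<open>b \<noteq> x\<close> cpos unfolding \<tau>_def
          by (auto simp: pos_le_divide_eq pos_less_divide_eq mult.commute)
      next
        assume "a \<noteq> x" "b = x"
        then have "(c * \<tau>' a, s) \<in> L" unfolding L_def using e by force
        then have "c * \<tau>' a \<le> t \<and> (s \<longrightarrow> c * \<tau>' a < t)" using t(2) by blast
        then show ?thesis using \<open>a \<noteq> x\<close> \<open>b = x\<close> unfolding \<tau>_def by auto
      next
        assume "a \<noteq> x" "b \<noteq> x"
        then have "(a,b,c,s) \<in> A'" unfolding A'_def A1_def using e by auto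
        then show ?thesis using sat' \<open>a \<noteq> x\<close> \<open>b \<noteq> x\<close> unfolding sat_def \<tau>_def by auto
      qed
    qed
    moreover have "\<forall>y. \<tau> y > 0" using tpos t(1) unfolding \<tau>_def by auto
    ultimately show "\<exists>\<tau>. (\<forall>x. \<tau> x > 0) \<and> sat \<tau> A" by blast
  qed
qed

lemma potential:
  assumes "finite A" "\<forall>(a,b,c,s)\<in>A. c > 0" "good A"
  shows "\<exists>\<tau>. (\<forall>x. \<tau> x > 0) \<and> sat \<tau> A"
proof -
  define V where "V = fst ` A \<union> (fst \<circ> snd) ` A"
  have "finite V" unfolding V_def using assms by auto
  moreover have "\<forall>(a,b,c,s)\<in>A. c > 0 \<and> a \<in> V \<and> b \<in> V" using assms(2) unfolding V_def by force
  ultimately show ?thesis using potential_aux assms by blast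
qed



definition trade :: "nat \<Rightarrow> nat \<Rightarrow> (nat \<Rightarrow> nat \<Rightarrow> real) \<Rightarrow> (nat \<times> nat) set \<Rightarrow> nat \<Rightarrow> nat \<Rightarrow> real \<Rightarrow> bool \<Rightarrow> (nat \<Rightarrow> nat \<Rightarrow> real) \<Rightarrow> bool" where
  "trade n m v S a b c s \<Delta> \<longleftrightarrow> a < n \<and> b < n \<and> c > 0 \<and>
     (\<forall>j<m. (\<Sum>i<n. \<Delta> i j) = 0) \<and>
     (\<forall>i<n. \<forall>j<m. (i,j) \<notin> S \<longrightarrow> \<Delta> i j \<ge> 0) \<and>
     (\<forall>k<n. (\<Sum>j<m. v k j * \<Delta> k j) = (if k = a then 1 else 0) - (if k = b then 1/c else 0)) \<and>
     (s \<longrightarrow> (\<exists>i<n. \<exists>j<m. (i,j) \<notin> S \<and> \<Delta> i j > 0))"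

lemma trade_base:
  assumes neg: "\<forall>i<n. \<forall>j<m. v i j < 0" and ij: "(i,j) \<in> S" "i < n" "j < m" and i': "i' < n"
  shows "\<exists>\<Delta>. trade n m v S i i' (\<bar>v i j\<bar> / \<bar>v i' j\<bar>) ((i',j) \<notin> S) \<Delta>"
proof -
  define w where "w = \<bar>v i j\<bar>"
  have "v i j < 0" using neg ij by blast
  then have wpos: "w > 0" unfolding w_def by auto
  have "v i' j < 0" using neg ij i' by blast
  then have w'pos: "\<bar>v i' j\<bar> > 0" by auto
  define \<Delta> where "\<Delta> = (\<lambda>k l. if l = j then ((if k = i' then 1 else 0) - (if k = i then 1 else 0)) / w else (0::real))"
  have col: "(\<Sum>k<n. \<Delta> k l) = 0" if "l < m" for l
  proof (cases "l = j")
    case True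
    have "(\<Sum>k<n. \<Delta> k l) = ((\<Sum>k<n. (if k = i' then 1 else 0)) - (\<Sum>k<n. (if k = i then 1 else 0))) / w"
      unfolding \<Delta>_def using True by (simp add: sum_subtractf sum_divide_distrib[symmetric])
    also have "\<dots> = 0" using ij i' by simp
    finally show ?thesis .
  qed (simp add: \<Delta>_def)
  have outS: "\<Delta> k l \<ge> 0" if "(k,l) \<notin> S" for k l
    using that ij wpos unfolding \<Delta>_def by auto
  have util: "(\<Sum>l<m. v k l * \<Delta> k l) = (if k = i then 1 else 0) - (if k = i' then 1 / (\<bar>v i j\<bar> / \<bar>v i' j\<bar>) else 0)"
    if "k < n" for k
  proof -
    have "(\<Sum>l<m. v k l * \<Delta> k l) = (\<Sum>l<m. if l = j then v k j * (((if k = i' then 1 else 0) - (if k = i then 1 else 0)) / w) else 0)"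
      unfolding \<Delta>_def by (intro sum.cong) auto
    also have "\<dots> = v k j * (((if k = i' then 1 else 0) - (if k = i then 1 else 0)) / w)"
      using ij by simp
    also have "\<dots> = (if k = i then 1 else 0) - (if k = i' then 1 / (\<bar>v i j\<bar> / \<bar>v i' j\<bar>) else 0)"
    proof -
      have a1: "\<bar>v i j\<bar> = - v i j" "\<bar>v i' j\<bar> = - v i' j" using \<open>v i j < 0\<close> \<open>v i' j < 0\<close> by auto
      have nz: "v i j \<noteq> 0" "v i' j \<noteq> 0" using \<open>v i j < 0\<close> \<open>v i' j < 0\<close> by auto
      consider "k = i" "k = i'" | "k = i" "k \<noteq> i'" | "k \<noteq> i" "k = i'" | "k \<noteq> i" "k \<noteq> i'" by blast
      then show ?thesis
      proof cases
        case 1 then show ?thesis unfolding w_def a1 using nz by simp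
      next
        case 2 then show ?thesis unfolding w_def a1 using nz by simp
      next
        case 3 then show ?thesis unfolding w_def a1 using nz by (simp add: field_simps)
      next
        case 4 then show ?thesis by simp
      qed
    qed
    finally show ?thesis .
  qed
  have strict: "(i',j) \<notin> S \<longrightarrow> (\<exists>a<n. \<exists>b<m. (a,b) \<notin> S \<and> \<Delta> a b > 0)"
  proof
    assume "(i',j) \<notin> S"
    then have "i' \<noteq> i" using ij by auto
    then have "\<Delta> i' j > 0" unfolding \<Delta>_def using wpos by auto
    then show "\<exists>a<n. \<exists>b<m. (a,b) \<notin> S \<and> \<Delta> a b > 0" using \<open>(i',j) \<notin> S\<close> i' ij by blast
  qed
  show ?thesis unfolding trade_def
    using col outS util strict ij i' wpos w'pos unfolding w_def by (intro exI[of _ \<Delta>]) auto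
qed


lemma trade_comp:
  assumes t1: "trade n m v S a b c1 s1 \<Delta>1" and t2: "trade n m v S b d c2 s2 \<Delta>2"
  shows "trade n m v S a d (c1*c2) (s1\<or>s2) (\<lambda>i j. \<Delta>1 i j + \<Delta>2 i j / c1)"
proof -
  have ab: "a < n" "b < n" "d < n" and c1: "c1 > 0" and c2: "c2 > 0"
    and col1: "\<And>j. j < m \<Longrightarrow> (\<Sum>i<n. \<Delta>1 i j) = 0"
    and col2: "\<And>j. j < m \<Longrightarrow> (\<Sum>i<n. \<Delta>2 i j) = 0"
    and o1: "\<And>i j. i<n \<Longrightarrow> j<m \<Longrightarrow> (i,j) \<notin> S \<Longrightarrow> \<Delta>1 i j \<ge> 0"
    and o2: "\<And>i j. i<n \<Longrightarrow> j<m \<Longrightarrow> (i,j) \<notin> S \<Longrightarrow> \<Delta>2 i j \<ge> 0"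
    and u1: "\<And>k. k<n \<Longrightarrow> (\<Sum>j<m. v k j * \<Delta>1 k j) = (if k = a then 1 else 0) - (if k = b then 1/c1 else 0)"
    and u2: "\<And>k. k<n \<Longrightarrow> (\<Sum>j<m. v k j * \<Delta>2 k j) = (if k = b then 1 else 0) - (if k = d then 1/c2 else 0)"
    and s1: "s1 \<Longrightarrow> (\<exists>i<n. \<exists>j<m. (i,j) \<notin> S \<and> \<Delta>1 i j > 0)"
    and s2: "s2 \<Longrightarrow> (\<exists>i<n. \<exists>j<m. (i,j) \<notin> S \<and> \<Delta>2 i j > 0)"
    using t1 t2 unfolding trade_def by blast+
  have col: "(\<Sum>i<n. \<Delta>1 i j + \<Delta>2 i j / c1) = 0" if "j < m" for j
  proof -
    have "(\<Sum>i<n. \<Delta>1 i j + \<Delta>2 i j / c1) = (\<Sum>i<n. \<Delta>1 i j) + (\<Sum>i<n. \<Delta>2 i j) / c1"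
      by (simp add: sum.distrib sum_divide_distrib)
    then show ?thesis using col1[OF that] col2[OF that] by simp
  qed
  have outS: "\<Delta>1 i j + \<Delta>2 i j / c1 \<ge> 0" if "i < n" "j < m" "(i,j) \<notin> S" for i j
    using o1[OF that] o2[OF that] c1 by simp
  have util: "(\<Sum>j<m. v k j * (\<Delta>1 k j + \<Delta>2 k j / c1)) = (if k = a then 1 else 0) - (if k = d then 1/(c1*c2) else 0)"
    if "k < n" for k
  proof -
    have "(\<Sum>j<m. v k j * (\<Delta>1 k j + \<Delta>2 k j / c1)) = (\<Sum>j<m. v k j * \<Delta>1 k j) + (\<Sum>j<m. v k j * \<Delta>2 k j) / c1"
      by (simp add: distrib_left sum.distrib sum_divide_distrib)
    also have "\<dots> = ((if k = a then 1 else 0) - (if k = b then 1/c1 else 0)) + ((if k = b then 1 else 0) - (if k = d then 1/c2 else 0)) / c1"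
      using u1[OF that] u2[OF that] by simp
    also have "\<dots> = (if k = a then 1 else 0) - (if k = d then 1/(c1*c2) else 0)"
      using c1 c2 by (cases "k = a"; cases "k = b"; cases "k = d") (simp_all add: field_simps)
    finally show ?thesis .
  qed
  have strict: "\<exists>i<n. \<exists>j<m. (i,j) \<notin> S \<and> \<Delta>1 i j + \<Delta>2 i j / c1 > 0" if "s1 \<or> s2"
  proof -
    from that consider "s1" | "s2" by blast
    then show ?thesis
    proof cases
      case 1
      then obtain i j where ij: "i<n" "j<m" "(i,j) \<notin> S" "\<Delta>1 i j > 0" using s1 by blast
      moreover have "\<Delta>2 i j / c1 \<ge> 0" using o2[OF ij(1-3)] c1 by simp
      ultimately show ?thesis by (intro exI[of _ i] conjI exI[of _ j]) auto
    next
      case 2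
      then obtain i j where ij: "i<n" "j<m" "(i,j) \<notin> S" "\<Delta>2 i j > 0" using s2 by blast
      moreover have "\<Delta>1 i j \<ge> 0" using o1[OF ij(1-3)] by simp
      moreover have "\<Delta>2 i j / c1 > 0" using c1 ij by simp
      ultimately show ?thesis by (intro exI[of _ i] conjI exI[of _ j]) auto
    qed
  qed
  have "c1 * c2 > 0" using c1 c2 by simp
  then show ?thesis unfolding trade_def using ab col outS util strict by blast
qed

lemma small_t:
  fixes z \<Delta> :: "nat \<Rightarrow> nat \<Rightarrow> real"
  assumes "\<forall>i<n. \<forall>j<m. z i j \<ge> 0" "\<forall>i<n. \<forall>j<m. \<Delta> i j < 0 \<longrightarrow> z i j > 0"
  shows "\<exists>t>0. \<forall>i<n. \<forall>j<m. z i j + t * \<Delta> i j \<ge> 0 \<and> (z i j > 0 \<longrightarrow> z i j + t * \<Delta> i j > 0)"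
proof -
  define K where "K = {p \<in> {..<n} \<times> {..<m}. \<Delta> (fst p) (snd p) < 0}"
  define T where "T = insert 1 ((\<lambda>p. z (fst p) (snd p) / (2 * (- \<Delta> (fst p) (snd p)))) ` K)"
  have fT: "finite T" unfolding T_def K_def by auto
  have Tpos: "\<forall>x\<in>T. x > 0"
  proof
    fix x assume "x \<in> T"
    then consider "x = 1" | p where "p \<in> K" "x = z (fst p) (snd p) / (2 * (- \<Delta> (fst p) (snd p)))"
      unfolding T_def by auto
    then show "x > 0"
    proof cases
      case 2
      then have "\<Delta> (fst p) (snd p) < 0" "fst p < n" "snd p < m" unfolding K_def by auto
      then have "z (fst p) (snd p) > 0" using assms by blast
      then show ?thesis using 2 \<open>\<Delta> (fst p) (snd p) < 0\<close> by (auto intro!: divide_pos_neg)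
    qed simp
  qed
  define t where "t = Min T"
  have tpos: "t > 0" unfolding t_def using fT Tpos T_def by auto
  have tle: "t \<le> x" if "x \<in> T" for x unfolding t_def using fT that by auto
  have "z i j + t * \<Delta> i j \<ge> 0 \<and> (z i j > 0 \<longrightarrow> z i j + t * \<Delta> i j > 0)" if "i < n" "j < m" for i j
  proof (cases "\<Delta> i j < 0")
    case True
    then have "(i,j) \<in> K" unfolding K_def using that by auto
    have "z i j / (2 * (- \<Delta> i j)) \<in> T" unfolding T_def
      by (rule insertI2, rule image_eqI[of _ _ "(i,j)"]) (use \<open>(i,j) \<in> K\<close> in auto)
    then have "t \<le> z i j / (2 * (- \<Delta> i j))" using tle by blast
    moreover have "2 * (- \<Delta> i j) > 0" using True by simp
    ultimately have "t * (2 * (- \<Delta> i j)) \<le> z i j" using pos_le_divide_eq by blast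
    moreover have "t * (2 * (- \<Delta> i j)) = -2 * (t * \<Delta> i j)" by simp
    moreover have "z i j > 0" using assms True that by auto
    ultimately show ?thesis by linarith
  next
    case False
    then have "t * \<Delta> i j \<ge> 0" using tpos by auto
    then show ?thesis using assms that by auto
  qed
  then show ?thesis using tpos by blast
qed





lemma part1:
  fixes n m :: nat and v :: "nat \<Rightarrow> nat \<Rightarrow> real"
  assumes neg: "\<forall>i<n. \<forall>j<m. v i j < 0" and u: "u \<in> PO_profiles n m v"
  shows "\<exists>z. allocation n m z \<and> profile n m v z = u \<and> cons_graph n m z \<in> MWW n m v"
proof -
  obtain z0 where po0: "pareto_optimal n m v z0" and u0: "u = profile n m v z0"
    using u unfolding PO_profiles_def by auto
  define Q where "Q = (\<lambda>z. allocation n m z \<and> profile n m v z = u)"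
  have Qz0: "Q z0" using po0 u0 unfolding Q_def pareto_optimal_def by auto
  have cgsub: "cons_graph n m y \<subseteq> {..<n} \<times> {..<m}" for y unfolding cons_graph_def by auto
  have cgfin: "finite (cons_graph n m y)" for y using cgsub finite_subset by blast
  have cgb: "card (cons_graph n m y) < n*m+1" for y
  proof -
    have "card (cons_graph n m y) \<le> card ({..<n} \<times> {..<m})" using cgsub by (intro card_mono) auto
    then show ?thesis by (simp add: card_cartesian_product)
  qed
  obtain z where Qz: "Q z" and zmax: "\<forall>y. Q y \<longrightarrow> card (cons_graph n m y) \<le> card (cons_graph n m z)"
    using ex_has_greatest_nat[of Q z0 "\<lambda>y. card (cons_graph n m y)" "n*m+1"] Qz0 cgb by blast
  have alz: "allocation n m z" and pz: "profile n m v z = u" using Qz unfolding Q_def by auto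
  have znn: "\<forall>i<n. \<forall>j<m. z i j \<ge> 0" and zcol: "\<forall>j<m. (\<Sum>i<n. z i j) = 1"
    using alz unfolding allocation_def by auto
  have noimp: "\<not> (allocation n m y \<and> (\<forall>i<n. profile n m v y i \<ge> u i) \<and> (\<exists>i<n. profile n m v y i > u i))" for y
    using po0 u0 unfolding pareto_optimal_def by blast
  define S where "S = cons_graph n m z"
  have Sin: "i<n \<and> j<m \<and> z i j > 0" if "(i,j)\<in>S" for i j using that unfolding S_def cons_graph_def by auto
  have Sin2: "(i,j) \<in> S" if "i<n" "j<m" "z i j > 0" for i j using that unfolding S_def cons_graph_def by auto
  define A where "A = (\<lambda>((i,j),i'). (i, i', \<bar>v i j\<bar> / \<bar>v i' j\<bar>, (i',j) \<notin> S)) ` (S \<times> {..<n})"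
  have fA: "finite A" unfolding A_def S_def using cgfin by auto
  have memA: "\<exists>i j i'. (i,j)\<in>S \<and> i'<n \<and> e = (i, i', \<bar>v i j\<bar> / \<bar>v i' j\<bar>, (i',j) \<notin> S)" if "e \<in> A" for e
    using that unfolding A_def by auto
  have posA: "\<forall>(a,b,c,s)\<in>A. c > 0"
  proof (intro ballI, clarify)
    fix a b c s assume "(a,b,c,s) \<in> A"
    from memA[OF this] obtain i j i' where h: "(i,j)\<in>S" "i'<n" "(a,b,c,s) = (i, i', \<bar>v i j\<bar> / \<bar>v i' j\<bar>, (i',j) \<notin> S)"
      by blast
    have "v i j < 0" "v i' j < 0" using neg Sin[OF h(1)] h(2) by auto
    then have "\<bar>v i j\<bar> / \<bar>v i' j\<bar> > 0" by (intro divide_pos_pos) auto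
    then show "c > 0" using h(3) by simp
  qed
  have trd: "\<exists>\<Delta>. trade n m v S (fst e) (fst (snd e)) (fst (snd (snd e))) (snd (snd (snd e))) \<Delta>"
    if "e \<in> der A" for e
    using that
  proof (induction rule: der.induct)
    case (base e)
    from memA[OF base] obtain i j i' where h: "(i,j)\<in>S" "i'<n" "e = (i, i', \<bar>v i j\<bar> / \<bar>v i' j\<bar>, (i',j) \<notin> S)"
      by blast
    show ?case using trade_base[OF neg h(1) _ _ h(2)] Sin[OF h(1)] h(3) by auto
  next
    case (comp a b c1 s1 d c2 s2)
    then obtain \<Delta>1 \<Delta>2 where "trade n m v S a b c1 s1 \<Delta>1" "trade n m v S b d c2 s2 \<Delta>2" by auto
    from trade_comp[OF this] show ?case by auto
  qed
  have gA: "good A" unfolding good_def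
  proof (intro allI impI)
    fix a c s assume "(a,a,c,s) \<in> der A"
    then obtain \<Delta> where tr: "trade n m v S a a c s \<Delta>" using trd by fastforce
    have an: "a < n" and cpos: "c > 0" and col: "\<forall>j<m. (\<Sum>i<n. \<Delta> i j) = 0"
      and outS: "\<forall>i<n. \<forall>j<m. (i,j) \<notin> S \<longrightarrow> \<Delta> i j \<ge> 0"
      and util0: "\<forall>k<n. (\<Sum>j<m. v k j * \<Delta> k j) = (if k = a then 1 else 0) - (if k = a then 1/c else 0)"
      and strict: "s \<longrightarrow> (\<exists>i<n. \<exists>j<m. (i,j) \<notin> S \<and> \<Delta> i j > 0)"
      using tr unfolding trade_def by blast+
    have negS: "\<forall>i<n. \<forall>j<m. \<Delta> i j < 0 \<longrightarrow> z i j > 0"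
    proof (intro allI impI)
      fix i j assume "i<n" "j<m" "\<Delta> i j < 0"
      then have "(i,j) \<in> S" using outS by force
      then show "z i j > 0" using Sin by blast
    qed
    obtain t where tpos: "t > 0" and tprop: "\<forall>i<n. \<forall>j<m. z i j + t * \<Delta> i j \<ge> 0 \<and> (z i j > 0 \<longrightarrow> z i j + t * \<Delta> i j > 0)"
      using small_t[OF znn negS] by blast
    define z' where "z' = (\<lambda>i j. z i j + t * \<Delta> i j)"
    have al': "allocation n m z'" unfolding allocation_def
    proof (intro conjI allI impI)
      fix i j assume "i<n" "j<m" then show "z' i j \<ge> 0" unfolding z'_def using tprop by blast
    next
      fix j assume j: "j<m"
      have "(\<Sum>i<n. z' i j) = (\<Sum>i<n. z i j) + t * (\<Sum>i<n. \<Delta> i j)"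
        unfolding z'_def by (simp add: sum.distrib sum_distrib_left)
      then show "(\<Sum>i<n. z' i j) = 1" using zcol col j by simp
    qed
    have prof': "profile n m v z' k = u k + t * ((if k = a then 1 else 0) - (if k = a then 1/c else 0))"
      if "k < n" for k
    proof -
      have "profile n m v z' k = (\<Sum>j<m. v k j * z k j) + t * (\<Sum>j<m. v k j * \<Delta> k j)"
        unfolding profile_def bundle_util_def z'_def using that
        by (simp add: distrib_left sum.distrib sum_distrib_left mult.left_commute)
      moreover have "u k = (\<Sum>j<m. v k j * z k j)" using pz that unfolding profile_def bundle_util_def by auto
      ultimately show ?thesis using util0 that by simp
    qed
    show "c \<le> 1 \<and> (s \<longrightarrow> c < 1)"
    proof (rule ccontr)
      assume "\<not> (c \<le> 1 \<and> (s \<longrightarrow> c < 1))"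
      then have "c > 1 \<or> (c = 1 \<and> s)" by auto
      then show False
      proof
        assume c1: "c > 1"
        then have "1/c < 1" by simp
        then have pa: "t * ((1::real) - 1/c) > 0" using tpos by simp
        have "\<forall>k<n. profile n m v z' k \<ge> u k"
        proof (intro allI impI)
          fix k assume "k<n" then show "profile n m v z' k \<ge> u k" using prof' pa by (cases "k = a") auto
        qed
        moreover have "profile n m v z' a > u a" using prof'[OF an] pa by simp
        ultimately show False using noimp[of z'] al' an by blast
      next
        assume cs: "c = 1 \<and> s"
        have pz': "profile n m v z' = u"
        proof
          fix k show "profile n m v z' k = u k"
          proof (cases "k < n")
            case True then show ?thesis using prof' cs by simp
          next
            case False then show ?thesis using pz unfolding profile_def by auto
          qed
        qed
        then have Qz': "Q z'" using al' unfolding Q_def by auto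
        have sub: "S \<subseteq> cons_graph n m z'"
        proof
          fix p assume "p \<in> S"
          then obtain i j where p: "p = (i,j)" "(i,j)\<in>S" by (cases p) auto
          then show "p \<in> cons_graph n m z'" using Sin[OF p(2)] tprop unfolding cons_graph_def z'_def by auto
        qed
        obtain i j where ij: "i<n" "j<m" "(i,j) \<notin> S" "\<Delta> i j > 0" using strict cs by blast
        have "z' i j > 0" unfolding z'_def using znn ij tpos by (simp add: add_nonneg_pos)
        then have "(i,j) \<in> cons_graph n m z'" using ij unfolding cons_graph_def by auto
        then have "S \<subset> cons_graph n m z'" using sub ij(3) by blast
        then have "card S < card (cons_graph n m z')" using cgfin by (intro psubset_card_mono) auto
        then show False using zmax Qz' unfolding S_def by fastforce
      qed
    qed
  qed
  obtain \<tau> where \<tau>pos: "\<forall>x. \<tau> x > 0" and sat: "sat \<tau> A" using potential[OF fA posA gA] by blast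
  have arcin: "(i, i', \<bar>v i j\<bar> / \<bar>v i' j\<bar>, (i',j) \<notin> S) \<in> A" if "(i,j)\<in>S" "i'<n" for i j i'
    unfolding A_def using that by force
  have ineq: "\<tau> i * \<bar>v i j\<bar> \<le> \<tau> i' * \<bar>v i' j\<bar> \<and> ((i',j) \<notin> S \<longrightarrow> \<tau> i * \<bar>v i j\<bar> < \<tau> i' * \<bar>v i' j\<bar>)"
    if "(i,j)\<in>S" "i'<n" for i j i'
  proof -
    have s: "\<bar>v i j\<bar> / \<bar>v i' j\<bar> * \<tau> i \<le> \<tau> i' \<and> ((i',j) \<notin> S \<longrightarrow> \<bar>v i j\<bar> / \<bar>v i' j\<bar> * \<tau> i < \<tau> i')"
      using sat arcin[OF that] unfolding sat_def by blast
    have "v i' j < 0" using neg Sin[OF that(1)] that(2) by auto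
    then have w: "\<bar>v i' j\<bar> > 0" by simp
    have e1: "(\<bar>v i j\<bar> / \<bar>v i' j\<bar> * \<tau> i \<le> \<tau> i') = (\<tau> i * \<bar>v i j\<bar> \<le> \<tau> i' * \<bar>v i' j\<bar>)"
      using w by (simp add: divide_le_eq mult.commute)
    have e2: "(\<bar>v i j\<bar> / \<bar>v i' j\<bar> * \<tau> i < \<tau> i') = (\<tau> i * \<bar>v i j\<bar> < \<tau> i' * \<bar>v i' j\<bar>)"
      using w by (simp add: divide_less_eq mult.commute)
    show ?thesis using s e1 e2 by simp
  qed
  have tg: "tau_graph n m \<tau> v = S"
  proof
    show "S \<subseteq> tau_graph n m \<tau> v"
    proof
      fix p assume "p \<in> S"
      then obtain i j where p: "p = (i,j)" "(i,j)\<in>S" by (cases p) auto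
      then show "p \<in> tau_graph n m \<tau> v" using Sin[OF p(2)] ineq[OF p(2)] unfolding tau_graph_def by auto
    qed
  next
    show "tau_graph n m \<tau> v \<subseteq> S"
    proof
      fix p assume "p \<in> tau_graph n m \<tau> v"
      then obtain k j where p: "p = (k,j)" "k<n" "j<m" and minv: "\<forall>i'<n. \<tau> k * \<bar>v k j\<bar> \<le> \<tau> i' * \<bar>v i' j\<bar>"
        unfolding tau_graph_def by auto
      show "p \<in> S"
      proof (rule ccontr)
        assume nS: "p \<notin> S"
        have "\<exists>i<n. z i j > 0"
        proof (rule ccontr)
          assume "\<not> (\<exists>i<n. z i j > 0)"
          then have "(\<Sum>i<n. z i j) \<le> 0" by (intro sum_nonpos) auto
          then show False using zcol p(3) by simp
        qed
        then obtain i where i: "i<n" "z i j > 0" by blast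
        then have iS: "(i,j) \<in> S" using Sin2 p(3) by blast
        have "\<tau> i * \<bar>v i j\<bar> < \<tau> k * \<bar>v k j\<bar>" using ineq[OF iS p(2)] nS p(1) by simp
        then show False using minv i(1) by fastforce
      qed
    qed
  qed
  have "cons_graph n m z \<in> MWW n m v" unfolding MWW_def using tg \<tau>pos unfolding S_def by auto
  then show ?thesis using alz pz by blast
qed



lemma spend_ge:
  fixes p x :: "nat \<Rightarrow> real" and bi U :: real
  assumes pneg: "\<forall>j<m. p j < 0" and bi: "bi < 0"
    and opt: "\<forall>x. (\<forall>j<m. x j \<ge> 0) \<and> (\<Sum>j<m. p j * x j) \<le> bi \<longrightarrow> bundle_util m v i x \<le> U"
    and vneg: "\<forall>j<m. v i j < 0" and x: "\<forall>j<m. x j \<ge> 0" and ux: "bundle_util m v i x \<ge> U"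
  shows "(\<Sum>j<m. p j * x j) \<ge> bi"
proof (rule ccontr)
  define P where "P = (\<Sum>j<m. p j * x j)"
  assume "\<not> (\<Sum>j<m. p j * x j) \<ge> bi"
  then have Pb: "P < bi" unfolding P_def by simp
  have "\<exists>j<m. x j > 0"
  proof (rule ccontr)
    assume "\<not> (\<exists>j<m. x j > 0)"
    then have "\<forall>j<m. x j = 0" using x by force
    then have "P = 0" unfolding P_def by simp
    then show False using Pb bi by simp
  qed
  then obtain j0 where j0: "j0 < m" "x j0 > 0" by blast
  have Uxneg: "bundle_util m v i x < 0"
  proof -
    have "(\<Sum>j<m. v i j * x j) < (\<Sum>j<m. (0::real))"
    proof (rule sum_strict_mono_ex1)
      show "\<forall>j\<in>{..<m}. v i j * x j \<le> 0" using vneg x by (auto simp: mult_nonpos_nonneg)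
      show "\<exists>j\<in>{..<m}. v i j * x j < 0" using vneg j0 by (intro bexI[of _ j0]) (auto simp: mult_neg_pos)
    qed simp
    then show ?thesis unfolding bundle_util_def by simp
  qed
  define s where "s = bi / P"
  have Pneg: "P < 0" using Pb bi by simp
  have s0: "s > 0" unfolding s_def using Pneg bi by (simp add: divide_neg_neg)
  have s1: "s < 1" unfolding s_def using Pneg Pb by (simp add: divide_less_eq)
  define y where "y = (\<lambda>j. s * x j)"
  have "(\<Sum>j<m. p j * y j) = s * P" unfolding y_def P_def by (simp add: sum_distrib_left mult.left_commute)
  also have "\<dots> = bi" unfolding s_def using Pneg by simp
  finally have "(\<Sum>j<m. p j * y j) \<le> bi" by simp
  moreover have "\<forall>j<m. y j \<ge> 0" unfolding y_def using s0 x by simp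
  ultimately have "bundle_util m v i y \<le> U" using opt by blast
  moreover have "bundle_util m v i y = s * bundle_util m v i x"
    unfolding y_def bundle_util_def by (simp add: sum_distrib_left mult.left_commute)
  moreover have "s * bundle_util m v i x > bundle_util m v i x"
  proof -
    have "(1 - s) * bundle_util m v i x < 0" using s1 Uxneg by (simp add: mult_pos_neg)
    then show ?thesis by (simp add: algebra_simps)
  qed
  ultimately show False using ux by simp
qed

lemma total_spend:
  assumes "allocation n m y"
  shows "(\<Sum>i<n. \<Sum>j<m. p j * y i j) = (\<Sum>j<m. (p j :: real))"
proof -
  have "(\<Sum>i<n. \<Sum>j<m. p j * y i j) = (\<Sum>j<m. \<Sum>i<n. p j * y i j)" by (rule sum.swap)
  also have "\<dots> = (\<Sum>j<m. p j * (\<Sum>i<n. y i j))" by (simp add: sum_distrib_left)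
  also have "\<dots> = (\<Sum>j<m. p j)" using assms unfolding allocation_def by simp
  finally show ?thesis .
qed

lemma part2:
  fixes n m :: nat and v :: "nat \<Rightarrow> nat \<Rightarrow> real"
  assumes neg: "\<forall>i<n. \<forall>j<m. v i j < 0" and bneg: "\<forall>i<n. b i < 0"
    and comp: "competitive n m v b z"
  shows "pareto_optimal n m v z"
    and "\<And>z'. allocation n m z' \<Longrightarrow> profile n m v z' = profile n m v z \<Longrightarrow> competitive n m v b z'"
proof -
  have alz: "allocation n m z" using comp unfolding competitive_def by blast
  obtain p where pneg: "\<forall>j<m. p j < 0"
    and bud: "\<forall>i<n. (\<Sum>j<m. p j * z i j) \<le> b i"
    and opt: "\<forall>i<n. \<forall>x. (\<forall>j<m. x j \<ge> 0) \<and> (\<Sum>j<m. p j * x j) \<le> b i \<longrightarrow>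
                bundle_util m v i x \<le> bundle_util m v i (z i)"
    using comp unfolding competitive_def by blast
  have sge: "(\<Sum>j<m. p j * x j) \<ge> b i"
    if "i < n" "\<forall>j<m. x j \<ge> 0" "bundle_util m v i x \<ge> bundle_util m v i (z i)" for i x
    using spend_ge[of m p "b i" v i "bundle_util m v i (z i)" x] pneg bneg opt neg that by blast
  have znn: "\<forall>j<m. z i j \<ge> 0" if "i < n" for i using alz that unfolding allocation_def by blast
  have seq: "(\<Sum>j<m. p j * z i j) = b i" if "i < n" for i
    using sge[OF that znn[OF that]] bud that by force
  have totb: "(\<Sum>i<n. b i) = (\<Sum>j<m. p j)"
    using total_spend[OF alz, of p] seq by simp
  show "pareto_optimal n m v z"
    unfolding pareto_optimal_def
  proof (intro conjI alz notI)
    assume "\<exists>z'. allocation n m z' \<and> (\<forall>i<n. profile n m v z' i \<ge> profile n m v z i) \<and>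
            (\<exists>i<n. profile n m v z' i > profile n m v z i)"
    then obtain z' k where al': "allocation n m z'" and ge: "\<forall>i<n. profile n m v z' i \<ge> profile n m v z i"
      and kn: "k < n" and gt: "profile n m v z' k > profile n m v z k" by blast
    have z'nn: "\<forall>j<m. z' i j \<ge> 0" if "i < n" for i using al' that unfolding allocation_def by blast
    have geb: "(\<Sum>j<m. p j * z' i j) \<ge> b i" if "i < n" for i
      using sge[OF that z'nn[OF that]] ge that unfolding profile_def by auto
    have gtb: "(\<Sum>j<m. p j * z' k j) > b k"
    proof (rule ccontr)
      assume "\<not> ?thesis"
      then have "bundle_util m v k (z' k) \<le> bundle_util m v k (z k)" using opt kn z'nn[OF kn] by simp
      then show False using gt kn unfolding profile_def by simp
    qed
    have "(\<Sum>i<n. b i) < (\<Sum>i<n. \<Sum>j<m. p j * z' i j)"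
      using geb gtb kn by (intro sum_strict_mono_ex1) auto
    then show False using total_spend[OF al', of p] totb by simp
  qed
  fix z' assume al': "allocation n m z'" and pr: "profile n m v z' = profile n m v z"
  have z'nn: "\<forall>j<m. z' i j \<ge> 0" if "i < n" for i using al' that unfolding allocation_def by blast
  have equ: "bundle_util m v i (z' i) = bundle_util m v i (z i)" if "i < n" for i
    using fun_cong[OF pr, of i] that unfolding profile_def by simp
  have geb: "(\<Sum>j<m. p j * z' i j) - b i \<ge> 0" if "i < n" for i
    using sge[OF that z'nn[OF that]] equ[OF that] by simp
  have "(\<Sum>i<n. (\<Sum>j<m. p j * z' i j) - b i) = 0"
    using total_spend[OF al', of p] totb by (simp add: sum_subtractf)
  then have eq0: "\<forall>i\<in>{..<n}. (\<Sum>j<m. p j * z' i j) - b i = 0"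
    using geb by (subst sum_nonneg_eq_0_iff[symmetric]) auto
  show "competitive n m v b z'" unfolding competitive_def
  proof (intro conjI al' exI[of _ p])
    show "\<forall>j<m. p j < 0" using pneg .
  next
    show "\<forall>i<n. (\<Sum>j<m. p j * z' i j) \<le> b i \<and>
           (\<forall>x. (\<forall>j<m. x j \<ge> 0) \<and> (\<Sum>j<m. p j * x j) \<le> b i \<longrightarrow>
                bundle_util m v i x \<le> bundle_util m v i (z' i))"
      using eq0 opt equ by simp
  qed
qed


theorem lemma2:
  fixes n m :: nat and v :: "nat \<Rightarrow> nat \<Rightarrow> real"
  assumes neg: "\<forall>i<n. \<forall>j<m. v i j < 0"
  shows "(\<forall>u \<in> PO_profiles n m v. \<exists>z. allocation n m z \<and> profile n m v z = u
            \<and> cons_graph n m z \<in> MWW n m v)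
       \<and> (\<forall>b. (\<forall>i<n. b i < 0) \<longrightarrow>
            (\<forall>u \<in> CU n m v b. \<exists>z. competitive n m v b z \<and> profile n m v z = u
               \<and> cons_graph n m z \<in> MWW n m v))"
proof -
  have A: "\<forall>u \<in> PO_profiles n m v. \<exists>z. allocation n m z \<and> profile n m v z = u
            \<and> cons_graph n m z \<in> MWW n m v" using part1[OF neg] by blast
  have B: "\<forall>b. (\<forall>i<n. b i < 0) \<longrightarrow>
            (\<forall>u \<in> CU n m v b. \<exists>z. competitive n m v b z \<and> profile n m v z = u
               \<and> cons_graph n m z \<in> MWW n m v)"
  proof (intro allI impI ballI)
    fix b u assume bneg: "\<forall>i<n. b i < 0" and u: "u \<in> CU n m v b"
    then obtain z where comp: "competitive n m v b z" and uz: "u = profile n m v z"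
      unfolding CU_def by auto
    have "pareto_optimal n m v z" using part2(1)[OF neg bneg comp] .
    then have "u \<in> PO_profiles n m v" unfolding PO_profiles_def using uz by auto
    then obtain z' where al': "allocation n m z'" and pz': "profile n m v z' = u"
      and g: "cons_graph n m z' \<in> MWW n m v" using part1[OF neg] by blast
    have "competitive n m v b z'" using part2(2)[OF neg bneg comp al'] pz' uz by simp
    then show "\<exists>z. competitive n m v b z \<and> profile n m v z = u \<and> cons_graph n m z \<in> MWW n m v"
      using pz' g by blast
  qed
  show ?thesis using A B by blast
qed

end
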